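(* Let $f\in GM$ be real-valued and $\alpha\in\mathbb{R}$. If $t^{2\alpha+1}f(t)\in L^1(0,1)$ and the improper integral $\int_0^\infty t^{2\alpha+1}f(t)\,dt$ converges, then $M_{2\alpha+2}(f):=\sup_{t\in\mathbb{R}_+}t^{2\alpha+2}|f(t)|<\infty$.
   Context: $\mathbb{R}_+=[0,\infty)$. All functions $f:\mathbb{R}_+\to\mathbb{C}$ considered are locally integrable, locally of bounded variation on $(0,\infty)$, and satisfy $f(t)\to 0$ as $t\to\infty$. Integrals over infinite intervals are improper Riemann integrals. Such an $f$ is called general monotone, written $f\in GM$, if there exist constants $C>1$ and $\lambda>1$ such that for every $x>0$, $$\int_x^{2x}|df(t)|\le C\int_{x/\lambda}^{\lambda x}\frac{|f(t)|}{t}\,dt,$$ where $|df|$ denotes the total variation measure of $f$. *)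

theory Defs
  imports "HOL-Analysis.Analysis"
begin

definition variation_sums :: "(real \<Rightarrow> 'a::real_normed_vector) \<Rightarrow> real \<Rightarrow> real \<Rightarrow> real set" where
  "variation_sums f a b =
     {(\<Sum>i<n. norm (f (x (Suc i)) - f (x i))) | x n.
        x 0 = a \<and> x n = b \<and> (\<forall>i<n. x i \<le> x (Suc i))}"

definition variation :: "(real \<Rightarrow> 'a::real_normed_vector) \<Rightarrow> real \<Rightarrow> real \<Rightarrow> real" where
  "variation f a b = Sup (variation_sums f a b)"

text \<open>General monotone functions (standing assumptions included).\<close>
definition GM :: "(real \<Rightarrow> 'a::euclidean_space) \<Rightarrow> bool" where
  "GM f \<longleftrightarrow>
     (\<forall>b\<ge>0. f absolutely_integrable_on {0..b}) \<and>
     (\<forall>a b. 0 < a \<and> a \<le> b \<longrightarrow> bdd_above (variation_sums f a b)) \<and>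
     (f \<longlongrightarrow> 0) at_top \<and>
     (\<exists>C>1. \<exists>lam>1. \<forall>x>0.
        variation f x (2 * x) \<le> C * integral {x / lam .. lam * x} (\<lambda>t. norm (f t) / t))"

end

theory Submission
  imports Defs
begin



locale gms =
  fixes f :: "real \<Rightarrow> real" and \<beta> C lam L :: real
  assumes fint: "\<And>b. b \<ge> 0 \<Longrightarrow> f absolutely_integrable_on {0..b}"
    and vbdd: "\<And>a b. 0 < a \<Longrightarrow> a \<le> b \<Longrightarrow> bdd_above (variation_sums f a b)"
    and flim: "(f \<longlongrightarrow> 0) at_top"
    and C1: "C > 1" and lam1: "lam > 1"
    and gm: "\<And>x. x > 0 \<Longrightarrow> variation f x (2 * x) \<le> C * integral {x / lam .. lam * x} (\<lambda>t. norm (f t) / t)"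
    and w01: "(\<lambda>t. t powr \<beta> * f t) absolutely_integrable_on {0<..<1}"
    and conv: "((\<lambda>R. integral {0..R} (\<lambda>t. t powr \<beta> * f t)) \<longlongrightarrow> L) at_top"
begin

definition w where "w t = t powr \<beta> * f t"

lemma cont_mult_ai:
  fixes g h :: "real \<Rightarrow> real"
  assumes "continuous_on {a..b} g" "h absolutely_integrable_on {a..b}"
  shows "(\<lambda>t. g t * h t) absolutely_integrable_on {a..b}"
proof -
  have "g \<in> borel_measurable (lebesgue_on {a..b})"
    using assms(1) by (intro continuous_imp_measurable_on_sets_lebesgue) (use fmeasurableD[OF lmeasurable_interval(1)] in auto)
  moreover have "bounded (g ` {a..b})"
    using assms(1) by (intro compact_imp_bounded compact_continuous_image) auto
  ultimately show ?thesis
    using absolutely_integrable_bounded_measurable_product_real[of g "{a..b}" h] assms(2) by auto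
qed

lemma w_ai0: assumes "B \<ge> 1" shows "w absolutely_integrable_on {0..B}"
proof -
  have a: "w absolutely_integrable_on {0..1}"
    using w01 absolutely_integrable_on_Icc_iff_Ioo unfolding w_def by blast
  have "f absolutely_integrable_on {1..B}"
    using assms by (intro absolutely_integrable_on_subinterval[OF fint[of B]]) auto
  then have b: "w absolutely_integrable_on {1..B}"
    unfolding w_def by (intro cont_mult_ai continuous_intros) auto
  show ?thesis using absolutely_integrable_on_combine[OF a b] assms by auto
qed

lemma w_ai: assumes "0 \<le> a" shows "w absolutely_integrable_on {a..b}"
  using assms by (intro absolutely_integrable_on_subinterval[OF w_ai0[of "max 1 b"]]) auto

lemma w_int: assumes "0 \<le> a" shows "w integrable_on {a..b}"
  using w_ai[OF assms, of b] unfolding absolutely_integrable_on_def by simp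

lemma aw_int: assumes "0 \<le> a" shows "(\<lambda>t. \<bar>w t\<bar>) integrable_on {a..b}"
  using w_ai[OF assms, of b] unfolding absolutely_integrable_on_def by simp

lemma f_ai: assumes "0 \<le> a" shows "f absolutely_integrable_on {a..b}"
  using assms by (intro absolutely_integrable_on_subinterval[OF fint[of "max 0 b"]]) auto

lemma fdiv_int: assumes "0 < a" shows "(\<lambda>t. norm (f t) / t) integrable_on {a..b}"
proof -
  have "(\<lambda>t. (1/t) * \<bar>f t\<bar>) absolutely_integrable_on {a..b}"
    using assms absolutely_integrable_abs[OF f_ai[of a b]] by (intro cont_mult_ai continuous_intros) auto
  then show ?thesis by (simp add: absolutely_integrable_on_def)
qed

lemma q_int: assumes "0 < a" shows "(\<lambda>t. t powr \<beta>) integrable_on {a..b}"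
  using assms by (intro integrable_continuous_interval continuous_intros) auto

lemma var_ge_sum:
  assumes "0 < a" "a \<le> b" "z 0 = a" "z n = b" "\<forall>i<n. z i \<le> z (Suc i)"
  shows "(\<Sum>i<n. \<bar>f (z (Suc i)) - f (z i)\<bar>) \<le> variation f a b"
proof -
  have "(\<Sum>i<n. norm (f (z (Suc i)) - f (z i))) \<in> variation_sums f a b"
    unfolding variation_sums_def using assms by blast
  then show ?thesis unfolding variation_def using vbdd[OF assms(1,2)]
    by (simp add: cSup_upper)
qed

lemma var_pt:
  assumes "0 < a" "a \<le> s" "s \<le> t" "t \<le> b"
  shows "\<bar>f t - f s\<bar> \<le> variation f a b"
proof -
  define z where "z i = [a,s,t,b] ! i" for i
  have "(\<Sum>i<3. \<bar>f (z (Suc i)) - f (z i)\<bar>) \<le> variation f a b"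
    apply (rule var_ge_sum) using assms by (auto simp: z_def less_Suc_eq numeral_3_eq_3)
  moreover have "(\<Sum>i<3. \<bar>f (z (Suc i)) - f (z i)\<bar>) \<ge> \<bar>f t - f s\<bar>"
    by (simp add: z_def numeral_3_eq_3 lessThan_Suc)
  ultimately show ?thesis by linarith
qed

lemma var_pt2:
  assumes "0 < a" "a \<le> s" "s \<le> b" "a \<le> t" "t \<le> b"
  shows "\<bar>f t - f s\<bar> \<le> variation f a b"
  using var_pt[of a s t b] var_pt[of a t s b] assms by (cases "s \<le> t") (auto simp: abs_minus_commute)

end



lemma integral_telescope:
  fixes g :: "real \<Rightarrow> real"
  assumes mono: "\<forall>i. z i \<le> z (Suc i)"
  shows "g integrable_on {z 0..z n} \<Longrightarrow> integral {z 0..z n} g = (\<Sum>i<n. integral {z i..z (Suc i)} g)"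
proof (induction n)
  case 0 then show ?case by simp
next
  case (Suc n)
  have le: "z 0 \<le> z n" using lift_Suc_mono_le[of z 0 n] mono by auto
  have le2: "z n \<le> z (Suc n)" using mono by auto
  have "g integrable_on {z 0..z n}"
    by (intro integrable_on_subinterval[OF Suc.prems]) (use le2 in auto)
  then have "integral {z 0..z n} g = (\<Sum>i<n. integral {z i..z (Suc i)} g)" using Suc.IH by blast
  moreover have "integral {z 0..z n} g + integral {z n..z (Suc n)} g = integral {z 0..z (Suc n)} g"
    using Henstock_Kurzweil_Integration.integral_combine[OF le le2 Suc.prems] .
  ultimately show ?case by simp
qed

context gms begin

lemma piece:
  assumes c: "0 < c" "c \<le> e" and d: "\<forall>t\<in>{c..e}. \<bar>f t - f c\<bar> \<le> d"
  shows "integral {c..e} (\<lambda>t. \<bar>w t\<bar>) \<le> \<bar>integral {c..e} w\<bar> + 2 * d * integral {c..e} (\<lambda>t. t powr \<beta>)"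
proof -
  define I where "I = integral {c..e} (\<lambda>t. t powr \<beta>)"
  have qi: "(\<lambda>t. t powr \<beta>) integrable_on {c..e}" using q_int c by auto
  have qci: "(\<lambda>t. t powr \<beta> * k) integrable_on {c..e}" for k
    using c by (intro integrable_continuous_interval continuous_intros) auto
  have wi: "w integrable_on {c..e}" using w_int c by auto
  have awi: "(\<lambda>t. \<bar>w t\<bar>) integrable_on {c..e}" using aw_int c by auto
  have "integral {c..e} (\<lambda>t. \<bar>w t\<bar>) \<le> integral {c..e} (\<lambda>t. t powr \<beta> * (\<bar>f c\<bar> + d))"
  proof (rule integral_le[OF awi qci])
    fix t assume t: "t \<in> {c..e}"
    have "\<bar>f t\<bar> \<le> \<bar>f c\<bar> + d" using d t by force
    moreover have "\<bar>w t\<bar> = t powr \<beta> * \<bar>f t\<bar>" unfolding w_def by (simp add: abs_mult)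
    ultimately show "\<bar>w t\<bar> \<le> t powr \<beta> * (\<bar>f c\<bar> + d)"
      by (simp add: mult_left_mono)
  qed
  also have "\<dots> = I * (\<bar>f c\<bar> + d)" unfolding I_def by (rule Henstock_Kurzweil_Integration.integral_mult_left)
  finally have i1: "integral {c..e} (\<lambda>t. \<bar>w t\<bar>) \<le> I * (\<bar>f c\<bar> + d)" .
  have "integral {c..e} (\<lambda>t. w t - t powr \<beta> * f c) = integral {c..e} w - I * f c"
    using integral_diff[OF wi qci[of "f c"]] unfolding I_def by (simp add: Henstock_Kurzweil_Integration.integral_mult_left)
  moreover have "\<bar>integral {c..e} (\<lambda>t. w t - t powr \<beta> * f c)\<bar> \<le> integral {c..e} (\<lambda>t. t powr \<beta> * d)"
  proof -
    have "norm (integral {c..e} (\<lambda>t. w t - t powr \<beta> * f c)) \<le> integral {c..e} (\<lambda>t. t powr \<beta> * d)"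
    proof (rule integral_norm_bound_integral)
      show "(\<lambda>t. w t - t powr \<beta> * f c) integrable_on {c..e}"
        using integrable_diff[OF wi qci[of "f c"]] .
      show "(\<lambda>t. t powr \<beta> * d) integrable_on {c..e}" using qci .
      fix t assume t: "t \<in> {c..e}"
      have "norm (w t - t powr \<beta> * f c) = t powr \<beta> * \<bar>f t - f c\<bar>"
        unfolding w_def by (simp add: abs_mult flip: right_diff_distrib)
      also have "\<dots> \<le> t powr \<beta> * d" using d t by (intro mult_left_mono) auto
      finally show "norm (w t - t powr \<beta> * f c) \<le> t powr \<beta> * d" .
    qed
    then show ?thesis by simp
  qed
  ultimately have "\<bar>integral {c..e} w - I * f c\<bar> \<le> I * d"
    unfolding I_def by (simp add: Henstock_Kurzweil_Integration.integral_mult_left)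
  moreover have "I \<ge> 0" unfolding I_def using qi by (intro integral_nonneg) auto
  ultimately have "I * \<bar>f c\<bar> \<le> \<bar>integral {c..e} w\<bar> + I * d"
  proof -
    assume h1: "\<bar>integral {c..e} w - I * f c\<bar> \<le> I * d" and h2: "I \<ge> 0"
    have "I * \<bar>f c\<bar> = \<bar>I * f c\<bar>" using h2 by (simp add: abs_mult)
    moreover have "\<bar>I * f c\<bar> \<le> \<bar>integral {c..e} w\<bar> + \<bar>integral {c..e} w - I * f c\<bar>"
      by arith
    ultimately show ?thesis using h1 by linarith
  qed
  with i1 show ?thesis unfolding I_def by (simp add: algebra_simps)
qed

lemma Kbound: "\<exists>K\<ge>0. \<forall>a b. 0 \<le> a \<longrightarrow> a \<le> b \<longrightarrow> \<bar>integral {a..b} w\<bar> \<le> K"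
proof -
  have conv': "((\<lambda>R. integral {0..R} w) \<longlongrightarrow> L) at_top"
    using conv unfolding w_def[abs_def] .
  then have "eventually (\<lambda>R. dist (integral {0..R} w) L < 1) at_top"
    by (rule tendstoD) simp
  then obtain R0 where R0: "\<And>R. R \<ge> R0 \<Longrightarrow> dist (integral {0..R} w) L < 1"
    by (auto simp: eventually_at_top_linorder)
  define R1 where "R1 = max R0 0"
  define K1 where "K1 = \<bar>L\<bar> + 1 + integral {0..R1} (\<lambda>t. \<bar>w t\<bar>)"
  have F: "\<bar>integral {0..R} w\<bar> \<le> K1" if "R \<ge> 0" for R
  proof (cases "R \<ge> R1")
    case True
    then have "dist (integral {0..R} w) L < 1" using R0 R1_def by auto
    moreover have "integral {0..R1} (\<lambda>t. \<bar>w t\<bar>) \<ge> 0"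
      using aw_int by (intro integral_nonneg) auto
    ultimately show ?thesis unfolding K1_def dist_real_def by linarith
  next
    case False
    have "\<bar>integral {0..R} w\<bar> \<le> integral {0..R} (\<lambda>t. \<bar>w t\<bar>)"
      using integral_norm_bound_integral[of w "{0..R}" "\<lambda>t. \<bar>w t\<bar>"] w_int[of 0 R] aw_int[of 0 R] by auto
    also have "\<dots> \<le> integral {0..R1} (\<lambda>t. \<bar>w t\<bar>)"
      using False that by (intro integral_subset_le aw_int) auto
    finally show ?thesis unfolding K1_def by linarith
  qed
  have "\<bar>integral {a..b} w\<bar> \<le> 2 * K1" if "0 \<le> a" "a \<le> b" for a b
  proof -
    have "integral {0..a} w + integral {a..b} w = integral {0..b} w"
      using that by (intro Henstock_Kurzweil_Integration.integral_combine w_int) auto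
    then show ?thesis using F[of a] F[of b] that by linarith
  qed
  moreover have "K1 \<ge> 0" using F[of 0] by linarith
  ultimately show ?thesis by (intro exI[of _ "2*K1"]) auto
qed

end



lemma sum_even_odd: "(\<Sum>k<2*n. g k) = (\<Sum>i<n. g (2*i) + g (Suc (2*i)))"
  by (induction n) (auto simp: algebra_simps)

context gms begin

lemma block:
  fixes n :: nat and K :: real
  assumes x: "x > 0" and n: "n > 0"
    and K: "\<forall>a b. 0 \<le> a \<longrightarrow> a \<le> b \<longrightarrow> \<bar>integral {a..b} w\<bar> \<le> K"
  shows "integral {x..2*x} (\<lambda>t. \<bar>w t\<bar>)
     \<le> real n * K + 2 * (x / n) * (x powr \<beta> + (2*x) powr \<beta>) * variation f x (2*x)"
proof -
  define h where "h = x / n"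
  define c where "c i = x + i * h" for i :: nat
  define V where "V = variation f x (2*x)"
  define Mx where "Mx = x powr \<beta> + (2*x) powr \<beta>"
  define S where "S i = {\<bar>f t - f (c i)\<bar> | t. t \<in> {c i..c (Suc i)}}" for i
  define d where "d i = Sup (S i)" for i
  have h0: "h > 0" using x n by (simp add: h_def)
  have cn: "c n = 2 * x" using n by (simp add: c_def h_def)
  have c0: "c 0 = x" by (simp add: c_def)
  have cmono: "\<forall>i. c i \<le> c (Suc i)" using h0 by (simp add: c_def algebra_simps)
  have cge: "c i \<ge> x" for i using h0 by (simp add: c_def)
  have cle: "c i \<le> 2 * x" if "i \<le> n" for i
  proof -
    have "real i * h \<le> real n * h" using that h0 by (intro mult_right_mono) auto
    then show ?thesis using n by (simp add: c_def h_def)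
  qed
  have bd: "\<bar>f t - f (c i)\<bar> \<le> V" if "i < n" "t \<in> {c i..c (Suc i)}" for i t
    unfolding V_def using that x cge[of i] cle[of "Suc i"]
    by (intro var_pt2) auto
  have Sne: "S i \<noteq> {}" for i
  proof -
    have "c i \<in> {c i..c (Suc i)}" using cmono by auto
    then show ?thesis unfolding S_def by blast
  qed
  have Sbdd: "bdd_above (S i)" if "i < n" for i
    unfolding S_def bdd_above_def using bd[OF that] by auto
  have dle: "\<bar>f t - f (c i)\<bar> \<le> d i" if "i < n" "t \<in> {c i..c (Suc i)}" for i t
    unfolding d_def using Sbdd[OF that(1)] that(2) by (intro cSup_upper) (auto simp: S_def)
  have d0: "d i \<ge> 0" if "i < n" for i
    using dle[OF that, of "c i"] cmono by auto
  have sumd: "(\<Sum>i<n. d i) \<le> V"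
  proof (rule field_le_epsilon)
    fix e :: real assume e: "e > 0"
    define e' where "e' = e / n"
    have e': "e' > 0" using e n by (simp add: e'_def)
    have "\<forall>i\<in>{..<n}. \<exists>t. t \<in> {c i..c (Suc i)} \<and> d i - e' < \<bar>f t - f (c i)\<bar>"
    proof
      fix i assume i: "i \<in> {..<n}"
      show "\<exists>t. t \<in> {c i..c (Suc i)} \<and> d i - e' < \<bar>f t - f (c i)\<bar>"
      proof (rule ccontr)
        assume "\<not> ?thesis"
        then have "\<forall>s\<in>S i. s \<le> d i - e'" unfolding S_def by force
        then have "d i \<le> d i - e'" unfolding d_def using Sne by (intro cSup_least) auto
        then show False using e' by linarith
      qed
    qed
    then obtain tt where tt: "\<forall>i\<in>{..<n}. tt i \<in> {c i..c (Suc i)} \<and> d i - e' < \<bar>f (tt i) - f (c i)\<bar>"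
      by (metis bchoice)
    define z where "z k = (if even k then c (k div 2) else tt (k div 2))" for k
    define g where "g k = \<bar>f (z (Suc k)) - f (z k)\<bar>" for k
    have "(\<Sum>k<2*n. g k) \<le> V"
      unfolding g_def V_def
    proof (rule var_ge_sum)
      show "0 < x" "x \<le> 2 * x" using x by auto
      show "z 0 = x" by (simp add: z_def c0)
      show "z (2 * n) = 2 * x" by (simp add: z_def cn)
      show "\<forall>i<2 * n. z i \<le> z (Suc i)"
      proof (intro allI impI)
        fix k assume k: "k < 2 * n"
        define i where "i = k div 2"
        have "i < n" using k by (simp add: i_def)
        then have tti: "tt i \<in> {c i..c (Suc i)}" using tt by blast
        show "z k \<le> z (Suc k)"
        proof (cases "even k")
          case True
          then have "z k = c i" "z (Suc k) = tt i"
            by (simp_all add: z_def i_def)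
          then show ?thesis using tti by simp
        next
          case False
          then have "Suc k div 2 = Suc i" unfolding i_def by presburger
          then have "z k = tt i" "z (Suc k) = c (Suc i)"
            using False by (simp_all add: z_def i_def)
          then show ?thesis using tti by simp
        qed
      qed
    qed
    moreover have "(\<Sum>k<2*n. g k) = (\<Sum>i<n. g (2*i) + g (Suc (2*i)))" by (rule sum_even_odd)
    moreover have "(\<Sum>i<n. d i - e') \<le> (\<Sum>i<n. g (2*i) + g (Suc (2*i)))"
    proof (rule sum_mono)
      fix i assume i: "i \<in> {..<n}"
      have "g (2 * i) = \<bar>f (tt i) - f (c i)\<bar>" by (simp add: g_def z_def)
      moreover have "g (Suc (2*i)) \<ge> 0" by (simp add: g_def)
      moreover have "d i - e' < \<bar>f (tt i) - f (c i)\<bar>" using tt i by blast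
      ultimately show "d i - e' \<le> g (2 * i) + g (Suc (2 * i))" by linarith
    qed
    moreover have "(\<Sum>i<n. d i - e') = (\<Sum>i<n. d i) - e"
      using n by (simp add: sum_subtractf e'_def)
    ultimately show "(\<Sum>i<n. d i) \<le> V + e" by linarith
  qed
  have tel: "integral {x..2*x} (\<lambda>t. \<bar>w t\<bar>) = (\<Sum>i<n. integral {c i..c (Suc i)} (\<lambda>t. \<bar>w t\<bar>))"
    using integral_telescope[of c "\<lambda>t. \<bar>w t\<bar>" n, OF cmono] aw_int[of "c 0" "c n"] x
    by (simp add: c0 cn)
  have qb: "integral {c i..c (Suc i)} (\<lambda>t. t powr \<beta>) \<le> h * Mx" if "i < n" for i
  proof -
    have "integral {c i..c (Suc i)} (\<lambda>t. t powr \<beta>) \<le> integral {c i..c (Suc i)} (\<lambda>t. Mx)"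
    proof (rule integral_le)
      show "(\<lambda>t. t powr \<beta>) integrable_on {c i..c (Suc i)}" using q_int cge[of i] x by auto
      show "(\<lambda>t. Mx) integrable_on {c i..c (Suc i)}" by (intro integrable_continuous_interval continuous_intros)
      fix t assume t: "t \<in> {c i..c (Suc i)}"
      then have t1: "x \<le> t" "t \<le> 2 * x" using cge[of i] cle[of "Suc i"] that by auto
      show "t powr \<beta> \<le> Mx"
      proof (cases "\<beta> \<ge> 0")
        case True
        then have "t powr \<beta> \<le> (2*x) powr \<beta>" using t1 x by (intro powr_mono2) auto
        then show ?thesis unfolding Mx_def using x by (smt (verit) powr_ge_zero)
      next
        case False
        then have "t powr \<beta> \<le> x powr \<beta>" using t1 x by (intro powr_mono2') auto
        then show ?thesis unfolding Mx_def using x by (smt (verit) powr_ge_zero)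
      qed
    qed
    also have "\<dots> = h * Mx" using cmono by (simp add: c_def algebra_simps)
    finally show ?thesis .
  qed
  have pc: "integral {c i..c (Suc i)} (\<lambda>t. \<bar>w t\<bar>) \<le> K + 2 * d i * (h * Mx)" if "i < n" for i
  proof -
    have "integral {c i..c (Suc i)} (\<lambda>t. \<bar>w t\<bar>)
      \<le> \<bar>integral {c i..c (Suc i)} w\<bar> + 2 * d i * integral {c i..c (Suc i)} (\<lambda>t. t powr \<beta>)"
      using x cge[of i] cmono dle[OF that] by (intro piece) auto
    moreover have "\<bar>integral {c i..c (Suc i)} w\<bar> \<le> K" using K[rule_format, of "c i" "c (Suc i)"] cge[of i] x cmono by auto
    moreover have "2 * d i * integral {c i..c (Suc i)} (\<lambda>t. t powr \<beta>) \<le> 2 * d i * (h * Mx)"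
      using qb[OF that] d0[OF that] by (intro mult_left_mono) auto
    ultimately show ?thesis by linarith
  qed
  have "integral {x..2*x} (\<lambda>t. \<bar>w t\<bar>) \<le> (\<Sum>i<n. K + 2 * d i * (h * Mx))"
    unfolding tel by (intro sum_mono pc) auto
  also have "\<dots> = real n * K + 2 * h * Mx * (\<Sum>i<n. d i)"
    by (simp add: sum.distrib sum_distrib_left sum_distrib_right algebra_simps)
  also have "\<dots> \<le> real n * K + 2 * h * Mx * V"
    using sumd h0 x by (intro add_left_mono mult_left_mono) (auto simp: Mx_def)
  finally show ?thesis by (simp add: h_def Mx_def V_def)
qed

end



context gms begin

definition N where "N y = integral {y..2*y} (\<lambda>t. \<bar>w t\<bar>)"
definition W where "W x = integral {x/lam..lam*x} (\<lambda>t. \<bar>w t\<bar>)"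
definition Dx where "Dx x = (x/lam) powr (-(\<beta>+1)) + (lam*x) powr (-(\<beta>+1))"
definition c0 where "c0 = (1 + 2 powr \<beta>) * (lam powr (\<beta>+1) + lam powr (-(\<beta>+1)))"

lemma tpow_le_Dx: assumes "x > 0" "t \<in> {x/lam..lam*x}" shows "t powr (-(\<beta>+1)) \<le> Dx x"
proof -
  have t1: "x/lam \<le> t" "t \<le> lam*x" using assms by auto
  have xl: "x/lam > 0" using assms lam1 by auto
  show ?thesis
  proof (cases "-(\<beta>+1) \<ge> 0")
    case True
    then have "t powr (-(\<beta>+1)) \<le> (lam*x) powr (-(\<beta>+1))" using t1 xl by (intro powr_mono2) auto
    then show ?thesis unfolding Dx_def by (smt (verit) powr_ge_zero)
  next
    case False
    then have "t powr (-(\<beta>+1)) \<le> (x/lam) powr (-(\<beta>+1))" using t1 xl by (intro powr_mono2') auto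
    then show ?thesis unfolding Dx_def by (smt (verit) powr_ge_zero)
  qed
qed

lemma W_nonneg: "x > 0 \<Longrightarrow> W x \<ge> 0"
  unfolding W_def using lam1 aw_int by (intro integral_nonneg) auto

lemma N_nonneg: "y > 0 \<Longrightarrow> N y \<ge> 0"
  unfolding N_def using aw_int by (intro integral_nonneg) auto

lemma A_le: assumes x: "x > 0"
  shows "integral {x/lam..lam*x} (\<lambda>t. norm (f t) / t) \<le> Dx x * W x"
proof -
  have xl: "x/lam > 0" using assms lam1 by auto
  have "integral {x/lam..lam*x} (\<lambda>t. norm (f t) / t) \<le> integral {x/lam..lam*x} (\<lambda>t. Dx x * \<bar>w t\<bar>)"
  proof (rule integral_le)
    show "(\<lambda>t. norm (f t) / t) integrable_on {x/lam..lam*x}" using fdiv_int xl by auto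
    show "(\<lambda>t. Dx x * \<bar>w t\<bar>) integrable_on {x/lam..lam*x}"
      using aw_int xl by (intro integrable_on_mult_right) auto
    fix t assume t: "t \<in> {x/lam..lam*x}"
    then have tp: "t > 0" using xl by auto
    have "t powr \<beta> * t powr (-(\<beta>+1)) = t powr (-1)" using tp by (simp add: powr_add[symmetric])
    then have e: "t powr \<beta> * t powr (-(\<beta>+1)) = 1 / t" using tp by (simp add: powr_minus_divide)
    have "norm (f t) / t = \<bar>w t\<bar> * t powr (-(\<beta>+1))"
      unfolding w_def using e by (simp add: abs_mult field_simps)
    also have "\<dots> \<le> \<bar>w t\<bar> * Dx x" using tpow_le_Dx[OF x t] by (intro mult_left_mono) auto
    finally show "norm (f t) / t \<le> Dx x * \<bar>w t\<bar>" by (simp add: mult.commute)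
  qed
  also have "\<dots> = Dx x * W x" unfolding W_def by simp
  finally show ?thesis .
qed

lemma c0_eq: assumes x: "x > 0"
  shows "x * (x powr \<beta> + (2*x) powr \<beta>) * Dx x = c0"
proof -
  have l: "lam > 0" using lam1 by auto
  have e1: "(2*x) powr \<beta> = 2 powr \<beta> * x powr \<beta>" using x by (simp add: powr_mult)
  have xb: "x powr (\<beta>+1) = x powr \<beta> * x" using x by (simp add: powr_add)
  have lb: "lam powr (\<beta>+1) > 0" using l by simp
  have e2: "(x/lam) powr (-(\<beta>+1)) = lam powr (\<beta>+1) / (x powr \<beta> * x)"
    unfolding powr_minus_divide using x l by (simp add: powr_divide xb)
  have e3: "(lam*x) powr (-(\<beta>+1)) = 1 / (lam powr (\<beta>+1) * (x powr \<beta> * x))"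
    unfolding powr_minus_divide using x l by (simp add: powr_mult xb)
  have e4: "lam powr (-(\<beta>+1)) = 1 / lam powr (\<beta>+1)" unfolding powr_minus_divide by simp
  have xp: "x powr \<beta> > 0" using x by simp
  show ?thesis unfolding Dx_def c0_def e1 e2 e3 e4 using x xp lb
    by (simp add: field_simps)
qed

lemma c0_pos: "c0 > 0" unfolding c0_def using lam1 by (intro mult_pos_pos add_pos_pos) auto

lemma rec1:
  fixes n :: nat and K :: real
  assumes x: "x > 0" and n: "n > 0"
    and K: "\<forall>a b. 0 \<le> a \<longrightarrow> a \<le> b \<longrightarrow> \<bar>integral {a..b} w\<bar> \<le> K"
  shows "N x \<le> real n * K + (2 * C * c0 / n) * W x"
proof -
  define Mx where "Mx = x powr \<beta> + (2*x) powr \<beta>"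
  have Mx0: "Mx \<ge> 0" unfolding Mx_def by simp
  have "N x \<le> real n * K + 2 * (x / n) * Mx * variation f x (2*x)"
    unfolding N_def Mx_def using block[OF x n K] .
  also have "2 * (x / n) * Mx * variation f x (2*x) \<le> 2 * (x / n) * Mx * (C * (Dx x * W x))"
  proof -
    have "variation f x (2*x) \<le> C * (Dx x * W x)"
      using gm[OF x] A_le[OF x] C1 by (smt (verit) mult_left_mono)
    then show ?thesis using x n Mx0 by (intro mult_left_mono) auto
  qed
  also have "2 * (x / n) * Mx * (C * (Dx x * W x)) = (2 * C / n) * (x * Mx * Dx x) * W x"
    by (simp add: field_simps)
  also have "\<dots> = (2 * C * c0 / n) * W x" using c0_eq[OF x] unfolding Mx_def by simp
  finally show ?thesis by simp
qed

lemma W_cover: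
  fixes m :: nat
  assumes x: "x > 0" and m: "lam^2 \<le> 2^m"
  shows "W x \<le> (\<Sum>j<m. N (2^j * (x/lam)))"
proof -
  define z where "z j = 2^j * (x/lam)" for j :: nat
  have xl: "x/lam > 0" using x lam1 by auto
  have zmono: "\<forall>j. z j \<le> z (Suc j)"
  proof
    fix j
    have "z j \<ge> 0" using xl unfolding z_def by (intro mult_nonneg_nonneg) auto
    moreover have "z (Suc j) = 2 * z j" by (simp add: z_def)
    ultimately show "z j \<le> z (Suc j)" by simp
  qed
  have zm: "lam * x \<le> z m"
  proof -
    have "lam * x = lam^2 * (x/lam)" using lam1 by (simp add: power2_eq_square)
    also have "\<dots> \<le> 2^m * (x/lam)" using m xl by (intro mult_right_mono) auto
    finally show ?thesis by (simp add: z_def)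
  qed
  have "W x \<le> integral {z 0..z m} (\<lambda>t. \<bar>w t\<bar>)"
    unfolding W_def using zm xl by (intro integral_subset_le aw_int) (auto simp: z_def)
  also have "\<dots> = (\<Sum>j<m. integral {z j..z (Suc j)} (\<lambda>t. \<bar>w t\<bar>))"
    using zmono xl by (intro integral_telescope aw_int) (auto simp: z_def)
  also have "\<dots> = (\<Sum>j<m. N (2^j * (x/lam)))"
    by (simp add: N_def z_def mult.assoc)
  finally show ?thesis .
qed

end



lemma pow_powr: "0 < (t::real) \<Longrightarrow> (t ^ i) powr p = (t powr p) ^ i"
  by (induction i) (auto simp: powr_mult)

lemma powr_le_sum: "0 < (a::real) \<Longrightarrow> a \<le> t \<Longrightarrow> t \<le> b \<Longrightarrow> t powr q \<le> a powr q + b powr q"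
proof (cases "q \<ge> 0")
  case True
  assume "0 < a" "a \<le> t" "t \<le> b"
  then have "t powr q \<le> b powr q" using True by (intro powr_mono2) auto
  then show ?thesis by (smt (verit) powr_ge_zero)
next
  case False
  assume "0 < a" "a \<le> t" "t \<le> b"
  then have "t powr q \<le> a powr q" using False by (intro powr_mono2') auto
  then show ?thesis by (smt (verit) powr_ge_zero)
qed

context gms begin

definition G where "G b = integral {0..b} (\<lambda>t. \<bar>w t\<bar>)"
definition U where "U R = Sup (N ` {0<..R})"

lemma N_le_G: "0 < y \<Longrightarrow> y \<le> R \<Longrightarrow> N y \<le> G (2*R)"
  unfolding N_def G_def by (intro integral_subset_le aw_int) auto

lemma U_upper: "0 < y \<Longrightarrow> y \<le> R \<Longrightarrow> N y \<le> U R"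
  unfolding U_def
proof (rule cSup_upper)
  show "bdd_above (N ` {0<..R})" using N_le_G by (intro bdd_aboveI2[of _ _ "G (2*R)"]) auto
qed auto

lemma U_least: "0 < R \<Longrightarrow> (\<And>y. 0 < y \<Longrightarrow> y \<le> R \<Longrightarrow> N y \<le> B) \<Longrightarrow> U R \<le> B"
  unfolding U_def by (rule cSup_least) auto

lemma U_le_G: "0 < R \<Longrightarrow> U R \<le> G (2*R)"
  using N_le_G by (intro U_least) auto

lemma U_mono: "0 < R \<Longrightarrow> R \<le> R' \<Longrightarrow> U R \<le> U R'"
  by (intro U_least) (auto intro: U_upper)

lemma growth: "\<exists>T>0. \<forall>b\<ge>0. G b \<le> G T + b * T powr \<beta> + b powr (\<beta>+1)"
proof -
  have "eventually (\<lambda>t. dist (f t) 0 < 1) at_top" using flim by (rule tendstoD) simp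
  then obtain T0 where T0: "\<And>t. t \<ge> T0 \<Longrightarrow> \<bar>f t\<bar> < 1"
    by (auto simp: eventually_at_top_linorder)
  define T where "T = max T0 1"
  have T: "T > 0" "\<And>t. t \<ge> T \<Longrightarrow> \<bar>f t\<bar> \<le> 1" using T0 unfolding T_def by force+
  have "G b \<le> G T + b * T powr \<beta> + b powr (\<beta>+1)" if b: "b \<ge> 0" for b
  proof (cases "b \<le> T")
    case True
    have "G b \<le> G T" unfolding G_def using True b by (intro integral_subset_le aw_int) auto
    moreover have "b * T powr \<beta> \<ge> 0" using b by simp
    ultimately show ?thesis by (smt (verit) powr_ge_zero)
  next
    case False
    have "G T + integral {T..b} (\<lambda>t. \<bar>w t\<bar>) = G b"
      unfolding G_def using False T by (intro Henstock_Kurzweil_Integration.integral_combine aw_int) auto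
    moreover have "integral {T..b} (\<lambda>t. \<bar>w t\<bar>) \<le> integral {T..b} (\<lambda>t. T powr \<beta> + b powr \<beta>)"
    proof (rule integral_le)
      show "(\<lambda>t. \<bar>w t\<bar>) integrable_on {T..b}" using aw_int T by auto
      show "(\<lambda>t. T powr \<beta> + b powr \<beta>) integrable_on {T..b}"
        by (intro integrable_continuous_interval continuous_intros)
      fix t assume t: "t \<in> {T..b}"
      have "\<bar>w t\<bar> = t powr \<beta> * \<bar>f t\<bar>" unfolding w_def by (simp add: abs_mult)
      also have "\<dots> \<le> t powr \<beta> * 1" using T(2)[of t] t by (intro mult_left_mono) auto
      also have "\<dots> \<le> T powr \<beta> + b powr \<beta>" using powr_le_sum[of T t b \<beta>] t T by auto
      finally show "\<bar>w t\<bar> \<le> T powr \<beta> + b powr \<beta>" .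
    qed
    moreover have "integral {T..b} (\<lambda>t. T powr \<beta> + b powr \<beta>) = (b - T) * (T powr \<beta> + b powr \<beta>)"
      using False by simp
    moreover have "(b - T) * (T powr \<beta> + b powr \<beta>) \<le> b * (T powr \<beta> + b powr \<beta>)"
      using T by (intro mult_right_mono) auto
    moreover have "b * b powr \<beta> = b powr (\<beta>+1)" using b False T by (simp add: powr_add)
    ultimately show ?thesis by (simp add: algebra_simps)
  qed
  then show ?thesis using T by blast
qed

lemma Dx_scale: assumes "y > 0" shows "y powr (\<beta>+1) * Dx y = lam powr (\<beta>+1) + lam powr (-(\<beta>+1))"
proof -
  have l: "lam > 0" using lam1 by auto
  have "y powr (\<beta>+1) * (y/lam) powr (-(\<beta>+1)) = lam powr (\<beta>+1)"
    unfolding powr_minus_divide using assms l by (simp add: powr_divide)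
  moreover have "y powr (\<beta>+1) * (lam*y) powr (-(\<beta>+1)) = lam powr (-(\<beta>+1))"
    unfolding powr_minus_divide using assms l by (simp add: powr_mult)
  ultimately show ?thesis unfolding Dx_def by (simp add: distrib_left)
qed

lemma N_bounded: "\<exists>B. \<forall>y>0. N y \<le> B"
proof -
  obtain K where K0: "K \<ge> 0" and K: "\<forall>a b. 0 \<le> a \<longrightarrow> a \<le> b \<longrightarrow> \<bar>integral {a..b} w\<bar> \<le> K"
    using Kbound by blast
  obtain m :: nat where m: "lam^2 < 2^m" using real_arch_pow[of 2 "lam^2"] by auto
  define \<theta> where "\<theta> = 2^m / lam"
  have l: "lam > 0" using lam1 by auto
  have th1: "\<theta> > 1"
  proof -
    have "lam * lam < 2^m" using m by (simp add: power2_eq_square)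
    then have "lam < 2^m / lam" using l by (simp add: field_simps)
    then show ?thesis using lam1 unfolding \<theta>_def by linarith
  qed
  define p where "p = \<beta> + 1"
  define \<tau> where "\<tau> = 1 / (2 * (1 + \<theta> + \<theta> powr p))"
  have \<tau>0: "\<tau> > 0" unfolding \<tau>_def using th1 by (intro divide_pos_pos) (auto intro: add_pos_nonneg)
  define n :: nat where "n = nat \<lceil>2 * C * c0 * m / \<tau>\<rceil> + 1"
  have n0: "n > 0" by (simp add: n_def)
  define \<epsilon> where "\<epsilon> = 2 * C * c0 / n * m"
  have eps0: "\<epsilon> \<ge> 0" unfolding \<epsilon>_def using C1 c0_pos by auto
  have eps_tau: "\<epsilon> \<le> \<tau>"
  proof -
    have "2 * C * c0 * m / \<tau> \<le> real n" unfolding n_def by linarith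
    then have "2 * C * c0 * m \<le> \<tau> * n" using \<tau>0 by (simp add: field_simps)
    then show ?thesis unfolding \<epsilon>_def using n0 \<tau>0 by (simp add: field_simps)
  qed
  have tau_small: "\<tau> * (1 + \<theta> + \<theta> powr p) = 1/2"
  proof -
    have "1 + \<theta> + \<theta> powr p > 0" using th1 by (smt (verit) powr_ge_zero)
    then show ?thesis unfolding \<tau>_def by (simp add: field_simps)
  qed
  have e1: "\<epsilon> < 1" and e2: "\<epsilon> * \<theta> < 1" and e3: "\<epsilon> * \<theta> powr p < 1"
  proof -
    have "\<epsilon> * (1 + \<theta> + \<theta> powr p) \<le> 1/2"
    proof -
      have pos: "1 + \<theta> + \<theta> powr p \<ge> 0" using th1 by (smt (verit) powr_ge_zero)
      show ?thesis using mult_right_mono[OF eps_tau pos] tau_small by linarith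
    qed
    then have s: "\<epsilon> + \<epsilon> * \<theta> + \<epsilon> * \<theta> powr p \<le> 1/2" by (simp add: algebra_simps)
    have "\<epsilon> * \<theta> \<ge> 0" "\<epsilon> * \<theta> powr p \<ge> 0" using eps0 th1 by simp_all
    then show "\<epsilon> < 1" "\<epsilon> * \<theta> < 1" "\<epsilon> * \<theta> powr p < 1"
      using s eps0 by linarith+
  qed
  define E where "E = real n * K"
  have E0: "E \<ge> 0" unfolding E_def using K0 by simp
  have rec: "U R \<le> E + \<epsilon> * U (\<theta> * R)" if R: "R > 0" for R
  proof (rule U_least[OF R])
    fix y assume y: "0 < y" "y \<le> R"
    have "N (2^j * (y/lam)) \<le> U (\<theta> * R)" if j: "j < m" for j
    proof (rule U_upper)
      show "0 < 2^j * (y/lam)" using y l by simp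
      have "(2::real)^j \<le> 2^m" using j by (intro power_increasing) auto
      then have "2^j * (y/lam) \<le> 2^m * (R/lam)"
        using y l by (intro mult_mono divide_right_mono) auto
      then show "2^j * (y/lam) \<le> \<theta> * R" unfolding \<theta>_def by simp
    qed
    then have "(\<Sum>j<m. N (2^j * (y/lam))) \<le> (\<Sum>j<m. U (\<theta> * R))" by (intro sum_mono) auto
    then have W: "W y \<le> m * U (\<theta> * R)" using W_cover[OF y(1), of m] m by simp
    have "N y \<le> real n * K + (2 * C * c0 / n) * W y" using rec1[OF y(1) n0 K] .
    also have "\<dots> \<le> real n * K + (2 * C * c0 / n) * (m * U (\<theta> * R))"
      using W C1 c0_pos by (intro add_left_mono mult_left_mono) auto
    finally show "N y \<le> E + \<epsilon> * U (\<theta> * R)" unfolding E_def \<epsilon>_def by (simp add: algebra_simps)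
  qed
  have iter: "\<forall>R>0. U R \<le> E / (1 - \<epsilon>) + \<epsilon>^i * U (\<theta>^i * R)" for i
  proof (induction i)
    case 0
    have "E / (1 - \<epsilon>) \<ge> 0" using E0 e1 by simp
    then show ?case by simp
  next
    case (Suc i)
    show ?case
    proof (intro allI impI)
      fix R :: real assume R: "R > 0"
      have "U R \<le> E + \<epsilon> * U (\<theta> * R)" using rec[OF R] .
      also have "\<dots> \<le> E + \<epsilon> * (E / (1 - \<epsilon>) + \<epsilon>^i * U (\<theta>^i * (\<theta> * R)))"
        using Suc.IH R th1 eps0 by (intro add_left_mono mult_left_mono) auto
      also have "\<dots> = E / (1 - \<epsilon>) + \<epsilon>^Suc i * U (\<theta>^Suc i * R)"
        using e1 by (simp add: field_simps)
      finally show "U R \<le> E / (1 - \<epsilon>) + \<epsilon>^Suc i * U (\<theta>^Suc i * R)" .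
    qed
  qed
  obtain T where T: "T > 0" "\<forall>b\<ge>0. G b \<le> G T + b * T powr \<beta> + b powr (\<beta>+1)"
    using growth by blast
  have fin: "U R \<le> E / (1 - \<epsilon>)" if R: "R > 0" for R
  proof -
    define s where "s i = \<epsilon>^i * G T + (2 * R * T powr \<beta>) * (\<epsilon> * \<theta>)^i + (2*R) powr p * (\<epsilon> * \<theta> powr p)^i" for i
    have bnd: "U R \<le> E / (1 - \<epsilon>) + s i" for i
    proof -
      have tp: "\<theta>^i * R > 0" using th1 R by simp
      have "U (\<theta>^i * R) \<le> G (2 * (\<theta>^i * R))" using U_le_G[OF tp] .
      also have "\<dots> \<le> G T + (2 * (\<theta>^i * R)) * T powr \<beta> + (2 * (\<theta>^i * R)) powr p"
        using T(2) tp unfolding p_def by auto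
      finally have "\<epsilon>^i * U (\<theta>^i * R) \<le> \<epsilon>^i * (G T + (2 * (\<theta>^i * R)) * T powr \<beta> + (2 * (\<theta>^i * R)) powr p)"
        using eps0 by (intro mult_left_mono) auto
      also have "\<dots> = s i"
      proof -
        have "(2 * (\<theta>^i * R)) powr p = (2*R) powr p * (\<theta> powr p)^i"
          using th1 R by (simp add: powr_mult pow_powr mult.commute mult.left_commute)
        then show ?thesis unfolding s_def by (simp add: algebra_simps power_mult_distrib)
      qed
      finally show ?thesis using iter[of i] R by force
    qed
    have "s \<longlonglongrightarrow> 0 * G T + (2 * R * T powr \<beta>) * 0 + (2*R) powr p * 0"
      unfolding s_def using eps0 e1 e2 e3 th1
      by (intro tendsto_intros LIMSEQ_power_zero) (auto intro!: mult_nonneg_nonneg)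
    then have "(\<lambda>i. E / (1 - \<epsilon>) + s i) \<longlonglongrightarrow> E / (1 - \<epsilon>)"
      using tendsto_add[OF tendsto_const] by fastforce
    then show ?thesis using bnd by (intro LIMSEQ_le_const) auto
  qed
  show ?thesis using fin U_upper by (intro exI[of _ "E / (1 - \<epsilon>)"]) (meson order.trans order_refl)
qed

end



context gms begin

lemma final_bound: "\<exists>M. \<forall>y>0. y powr (\<beta>+1) * \<bar>f y\<bar> \<le> M"
proof -
  obtain B where B: "\<And>y. y > 0 \<Longrightarrow> N y \<le> B" using N_bounded by blast
  obtain m :: nat where m: "lam^2 < 2^m" using real_arch_pow[of 2 "lam^2"] by auto
  define \<mu> where "\<mu> = min 2 lam"
  have mu1: "\<mu> > 1" "\<mu> \<le> 2" "\<mu> \<le> lam" using lam1 unfolding \<mu>_def by auto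
  define k where "k = (C + \<mu> / (\<mu> - 1)) * (lam powr (\<beta>+1) + lam powr (-(\<beta>+1))) * (m * B)"
  have "y powr (\<beta>+1) * \<bar>f y\<bar> \<le> k" if y: "y > 0" for y
  proof -
    define V where "V = variation f y (2*y)"
    define A where "A = integral {y/lam..lam*y} (\<lambda>t. norm (f t) / t)"
    have yl: "y / lam > 0" using y lam1 by auto
    have VA: "V \<le> C * A" unfolding V_def A_def using gm[OF y] .
    have A0: "A \<ge> 0" unfolding A_def
    proof (rule integral_nonneg)
      show "(\<lambda>t. norm (f t) / t) integrable_on {y / lam..lam * y}" using fdiv_int[OF yl] .
      fix t assume "t \<in> {y / lam..lam * y}"
      then have "t > 0" using yl by auto
      then show "0 \<le> norm (f t) / t" by simp
    qed
    have "integral {y..\<mu>*y} (\<lambda>t. (\<bar>f y\<bar> - V) / (\<mu> * y)) \<le> integral {y..\<mu>*y} (\<lambda>t. norm (f t) / t)"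
    proof (rule integral_le)
      show "(\<lambda>t. (\<bar>f y\<bar> - V) / (\<mu> * y)) integrable_on {y..\<mu> * y}"
        by (intro integrable_continuous_interval continuous_intros)
      show "(\<lambda>t. norm (f t) / t) integrable_on {y..\<mu> * y}" using fdiv_int y by auto
      fix t assume t: "t \<in> {y..\<mu>*y}"
      have "\<mu> * y \<le> 2 * y" using mu1 y by (intro mult_right_mono) auto
      then have t2: "t \<le> 2 * y" using t by auto
      have "\<bar>f t - f y\<bar> \<le> V" unfolding V_def using t t2 y by (intro var_pt2) auto
      then have "\<bar>f y\<bar> - V \<le> \<bar>f t\<bar>" by linarith
      then have "(\<bar>f y\<bar> - V) / (\<mu> * y) \<le> \<bar>f t\<bar> / (\<mu> * y)" using y mu1 by (intro divide_right_mono) auto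
      also have "\<dots> \<le> \<bar>f t\<bar> / t" using t y by (intro divide_left_mono) auto
      finally show "(\<bar>f y\<bar> - V) / (\<mu> * y) \<le> norm (f t) / t" by simp
    qed
    also have "\<dots> \<le> A" unfolding A_def
    proof (rule integral_subset_le)
      have "y / lam \<le> y" using y lam1 by (simp add: divide_le_eq)
      moreover have "\<mu> * y \<le> lam * y" using mu1 y by (intro mult_right_mono) auto
      ultimately show "{y..\<mu> * y} \<subseteq> {y / lam..lam * y}" by auto
    qed (use fdiv_int y yl in auto)
    finally have "(\<mu> * y - y) * ((\<bar>f y\<bar> - V) / (\<mu> * y)) \<le> A" using mu1 y by simp
    moreover have "(\<mu> * y - y) * ((\<bar>f y\<bar> - V) / (\<mu> * y)) = ((\<mu> - 1)/\<mu>) * (\<bar>f y\<bar> - V)"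
      using y mu1 by (simp add: field_simps)
    ultimately have "((\<mu> - 1)/\<mu>) * (\<bar>f y\<bar> - V) \<le> A" by simp
    then have "\<bar>f y\<bar> - V \<le> (\<mu> / (\<mu> - 1)) * A" using mu1 by (simp add: field_simps)
    then have fy: "\<bar>f y\<bar> \<le> (C + \<mu> / (\<mu> - 1)) * A" using VA by (simp add: algebra_simps)
    have "A \<le> Dx y * W y" unfolding A_def using A_le[OF y] .
    also have "W y \<le> m * B"
    proof -
      have "W y \<le> (\<Sum>j<m. N (2^j * (y/lam)))" using W_cover[OF y, of m] m by simp
      also have "\<dots> \<le> (\<Sum>j<m. B)"
      proof (rule sum_mono)
        fix j assume "j \<in> {..<m}"
        have "0 < 2^j * (y/lam)" using yl by (intro mult_pos_pos) auto
        then show "N (2^j * (y/lam)) \<le> B" by (rule B)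
      qed
      finally show ?thesis by simp
    qed
    then have "Dx y * W y \<le> Dx y * (m * B)"
      using tpow_le_Dx[OF y, of y] y lam1 by (intro mult_left_mono) (auto simp: Dx_def intro: add_nonneg_nonneg)
    finally have "A \<le> Dx y * (m * B)" .
    then have "\<bar>f y\<bar> \<le> (C + \<mu> / (\<mu> - 1)) * (Dx y * (m * B))"
      using fy C1 mu1 by (smt (verit) divide_nonneg_nonneg mult_left_mono)
    then have "y powr (\<beta>+1) * \<bar>f y\<bar> \<le> y powr (\<beta>+1) * ((C + \<mu> / (\<mu> - 1)) * (Dx y * (m * B)))"
      by (intro mult_left_mono) auto
    also have "\<dots> = (C + \<mu> / (\<mu> - 1)) * ((y powr (\<beta>+1) * Dx y) * (m * B))" by (simp add: algebra_simps)
    also have "\<dots> = k" unfolding k_def Dx_scale[OF y] by (simp add: algebra_simps)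
    finally show ?thesis .
  qed
  then show ?thesis by blast
qed

end

theorem mainTheorem8:
  fixes f :: "real \<Rightarrow> real" and \<alpha> :: real
  assumes "GM f"
    and "(\<lambda>t. t powr (2 * \<alpha> + 1) * f t) absolutely_integrable_on {0<..<1}"
    and "\<exists>L. ((\<lambda>R. integral {0..R} (\<lambda>t. t powr (2 * \<alpha> + 1) * f t)) \<longlongrightarrow> L) at_top"
  shows "bdd_above ((\<lambda>t. t powr (2 * \<alpha> + 2) * \<bar>f t\<bar>) ` {0<..})"
proof -
  obtain L where L: "((\<lambda>R. integral {0..R} (\<lambda>t. t powr (2 * \<alpha> + 1) * f t)) \<longlongrightarrow> L) at_top"
    using assms(3) by blast
  obtain C lam where C: "C > 1" "lam > 1"
    and g: "\<forall>x>0. variation f x (2 * x) \<le> C * integral {x / lam .. lam * x} (\<lambda>t. norm (f t) / t)"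
    and fi: "\<forall>b\<ge>0. f absolutely_integrable_on {0..b}"
    and vb: "\<forall>a b. 0 < a \<and> a \<le> b \<longrightarrow> bdd_above (variation_sums f a b)"
    and fl: "(f \<longlongrightarrow> 0) at_top"
    using assms(1) unfolding GM_def by blast
  interpret gms f "2 * \<alpha> + 1" C lam L
    using C g fi vb fl assms(2) L by unfold_locales auto
  obtain M where M: "\<forall>y>0. y powr (2 * \<alpha> + 1 + 1) * \<bar>f y\<bar> \<le> M" using final_bound by blast
  show ?thesis
  proof (rule bdd_aboveI2)
    fix t :: real assume "t \<in> {0<..}"
    then show "t powr (2 * \<alpha> + 2) * \<bar>f t\<bar> \<le> M" using M by (simp add: add.assoc)
  qed
qed



end
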